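(* Let $M>1$ and let $Q$ be an indefinite ternary quadratic form of Diophantine type $M$ with $\det Q=1$. Then there exists $0<\eta<1$ such that for every $R>10$ the set $\{v\in\Delta_Q\cap\mathcal{H}_{\eta,M}: R\le\|v\|<R^2\}$ is contained in the union of at most six planes through the origin.
   Context: $\|\cdot\|$ is the supremum norm on $\mathbb{R}^3$; for quadratic forms $\|Q\|$ is the maximal absolute value of coefficients. $Q_0(v)=v_2^2-2v_1v_3$. Fix $g\in\mathrm{SL}_3(\mathbb{R})$ with $Q(v)=Q_0(gv)$ for all $v$ and set $\Delta_Q=g\mathbb{Z}^3$. $Q$ is of Diophantine type $M$ if there is $c>0$ with $\|Q-\rho Q'\|>c\|Q'\|^{-M}$ for every nonzero integral ternary quadratic form $Q'$, $\rho=(\det Q')^{-1/3}$. $\mathcal{H}_{\eta,M}=\{v\in\mathbb{R}^3:|Q_0(v)|<\eta\|v\|^{-50M}\}$. *)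

theory Defs
  imports "HOL-Analysis.Analysis"
begin

text \<open>The coefficients of Q are the diagonal entries A_ii
  (coefficient of v_i^2) and 2 A_ij for i < j (coefficient of v_i v_j).\<close>

definition qf :: "real^3^3 \<Rightarrow> real^3 \<Rightarrow> real" where
  "qf A v = v \<bullet> (A *v v)"

definition qcoef :: "real^3^3 \<Rightarrow> 3 \<Rightarrow> 3 \<Rightarrow> real" where
  "qcoef A i j = (if i = j then A$i$i else 2 * A$i$j)"

definition qnorm :: "real^3^3 \<Rightarrow> real" where
  "qnorm A = Max {\<bar>qcoef A i j\<bar> | i j. True}"

definition symmetric_form :: "real^3^3 \<Rightarrow> bool" where
  "symmetric_form A \<longleftrightarrow> transpose A = A"

definition integral_form :: "real^3^3 \<Rightarrow> bool" where
  "integral_form A \<longleftrightarrow> symmetric_form A \<and> (\<forall>i j. qcoef A i j \<in> \<int>)"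

text \<open>Determinant convention: normalised so that the model form Q0 has determinant 1
  (the Gram determinant of Q0 is -1), matching the paper's hypothesis det Q = 1
  for Q = Q0 o g, g in SL_3.\<close>
definition qdet :: "real^3^3 \<Rightarrow> real" where
  "qdet A = - det A"

definition Q0 :: "real^3 \<Rightarrow> real" where
  "Q0 v = (v$2)^2 - 2 * (v$1) * (v$3)"

definition diophantine_type :: "real^3^3 \<Rightarrow> real \<Rightarrow> bool" where
  "diophantine_type A M \<longleftrightarrow> (\<exists>c>0. \<forall>A'. integral_form A' \<and> A' \<noteq> 0 \<longrightarrow>
     qnorm (A - inverse (root 3 (qdet A')) *\<^sub>R A') > c * qnorm A' powr (- M))"

definition Hset :: "real \<Rightarrow> real \<Rightarrow> (real^3) set" where
  "Hset \<eta> M = {v. \<bar>Q0 v\<bar> < \<eta> * infnorm v powr (- 50 * M)}"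

definition lattice_of :: "real^3^3 \<Rightarrow> (real^3) set" where
  "lattice_of g = {g *v (\<chi> i. of_int (z$i)) | z :: int^3. True}"

definition plane :: "real^3 \<Rightarrow> (real^3) set" where
  "plane n = {v. n \<bullet> v = 0}"

end

theory Submission
  imports Defs "HOL-Analysis.Cross3"
begin
definition tp :: "real^3 \<Rightarrow> real^3 \<Rightarrow> real^3 \<Rightarrow> real" where
  "tp a b c = (cross3 a b) \<bullet> c"

lemma tp_expand: "tp a b c = a$1*b$2*c$3 - a$1*b$3*c$2 - a$2*b$1*c$3 + a$2*b$3*c$1 + a$3*b$1*c$2 - a$3*b$2*c$1"
  unfolding tp_def by (simp add: cross3_simps)

lemma cramer: "tp p1 p2 p3 *\<^sub>R y = tp y p2 p3 *\<^sub>R p1 + tp p1 y p3 *\<^sub>R p2 + tp p1 p2 y *\<^sub>R p3"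
  unfolding vec_eq_iff forall_3 tp_expand by (simp add: algebra_simps)

lemma pluecker: "tp p4 p2 p3 * tp p1 p5 p3 - tp p1 p4 p3 * tp p5 p2 p3 = tp p1 p2 p3 * tp p4 p5 p3"
  unfolding tp_expand by (simp add: field_simps)

definition bf :: "real^3^3 \<Rightarrow> real^3 \<Rightarrow> real^3 \<Rightarrow> real" where
  "bf X y z = y \<bullet> (X *v z)"


lemma qf_bf: "qf X y = bf X y y" unfolding qf_def bf_def by simp

lemma bf_add1: "bf X (a + b) c = bf X a c + bf X b c" unfolding bf_def by (simp add: inner_add_left)
lemma bf_add2: "bf X c (a + b) = bf X c a + bf X c b" unfolding bf_def by (simp add: inner_add_right matrix_vector_right_distrib)
lemma bf_scale1: "bf X (r *\<^sub>R a) c = r * bf X a c" unfolding bf_def by simp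
lemma bf_scale2: "bf X c (r *\<^sub>R a) = r * bf X c a" unfolding bf_def by (simp add: matrix_vector_mult_scaleR)

lemma qf_expand3: "qf X y = y$1*X$1$1*y$1 + y$1*X$1$2*y$2 + y$1*X$1$3*y$3 + y$2*X$2$1*y$1 + y$2*X$2$2*y$2 + y$2*X$2$3*y$3 + y$3*X$3$1*y$1 + y$3*X$3$2*y$2 + y$3*X$3$3*y$3"
  unfolding qf_def inner_vec_def matrix_vector_mult_def sum_3 by (simp add: algebra_simps)

lemma sym_entry: "symmetric_form X \<Longrightarrow> X$j$i = X$i$j"
proof -
  assume "symmetric_form X"
  then have "transpose X $ i $ j = X $ i $ j" unfolding symmetric_form_def by simp
  then show ?thesis by (simp add: transpose_def)
qed

lemma qf_zero_imp: 
  assumes "\<forall>y. qf X y = 0" "symmetric_form X" shows "X = 0"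
proof -
  have s: "X$j$i = X$i$j" for i j using assms(2) sym_entry by blast
  have q: "\<And>y. qf X y = 0" using assms(1) by simp
  have d1: "X$1$1 = 0" using q[of "vector[1,0,0]"] by (simp add: qf_expand3)
  have d2: "X$2$2 = 0" using q[of "vector[0,1,0]"] by (simp add: qf_expand3)
  have d3: "X$3$3 = 0" using q[of "vector[0,0,1]"] by (simp add: qf_expand3)
  have o12: "X$1$2 = 0" using q[of "vector[1,1,0]"] d1 d2 s[of 1 2] by (simp add: qf_expand3)
  have o13: "X$1$3 = 0" using q[of "vector[1,0,1]"] d1 d3 s[of 1 3] by (simp add: qf_expand3)
  have o23: "X$2$3 = 0" using q[of "vector[0,1,1]"] d2 d3 s[of 2 3] by (simp add: qf_expand3)
  show ?thesis unfolding vec_eq_iff forall_3 using d1 d2 d3 o12 o13 o23 s by auto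
qed

lemma bf_expand3: "bf X y z = y$1*X$1$1*z$1 + y$1*X$1$2*z$2 + y$1*X$1$3*z$3 + y$2*X$2$1*z$1 + y$2*X$2$2*z$2 + y$2*X$2$3*z$3 + y$3*X$3$1*z$1 + y$3*X$3$2*z$2 + y$3*X$3$3*z$3"
  unfolding bf_def inner_vec_def matrix_vector_mult_def sum_3 by (simp add: algebra_simps)

lemma bf_sym: "symmetric_form X \<Longrightarrow> bf X y z = bf X z y"
  unfolding bf_expand3 using sym_entry[of X] by (simp add: algebra_simps)

lemma qf_lin3:
  assumes "symmetric_form X"
  shows "qf X (a *\<^sub>R p + b *\<^sub>R q + c *\<^sub>R r) = a*a*qf X p + b*b*qf X q + c*c*qf X r
     + 2*a*b*bf X p q + 2*a*c*bf X p r + 2*b*c*bf X q r"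
proof -
  have 1: "bf X q p = bf X p q" "bf X r p = bf X p r" "bf X r q = bf X q r"
    using bf_sym[OF assms] by auto
  show ?thesis unfolding qf_bf bf_add1 bf_add2 bf_scale1 bf_scale2 1 by (simp add: algebra_simps)
qed

lemma qf_scale: "qf X (a *\<^sub>R p) = a*a*qf X p"
  unfolding qf_bf bf_scale1 bf_scale2 by simp

lemma lemmaU:
  assumes sym: "symmetric_form X" and D: "tp p1 p2 p3 \<noteq> 0"
    and z: "qf X p1 = 0" "qf X p2 = 0" "qf X p3 = 0" "qf X p4 = 0" "qf X p5 = 0" "qf X (p1 + p2) = 0"
    and g: "tp p1 p2 p4 \<noteq> 0" "tp p1 p2 p5 \<noteq> 0" "tp p4 p5 p3 \<noteq> 0"
  shows "X = 0"
proof -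
  define D where "D = tp p1 p2 p3"
  have b12: "bf X p1 p2 = 0"
    using z(1,2,6) bf_sym[OF sym, of p2 p1] unfolding qf_bf bf_add1 bf_add2 by simp
  define w1 w2 w3 where "w1 = tp p4 p2 p3" "w2 = tp p1 p4 p3" "w3 = tp p1 p2 p4"
  define u1 u2 u3 where "u1 = tp p5 p2 p3" "u2 = tp p1 p5 p3" "u3 = tp p1 p2 p5"
  have c4: "D *\<^sub>R p4 = w1 *\<^sub>R p1 + w2 *\<^sub>R p2 + w3 *\<^sub>R p3" unfolding D_def w1_w2_w3_def by (rule cramer)
  have c5: "D *\<^sub>R p5 = u1 *\<^sub>R p1 + u2 *\<^sub>R p2 + u3 *\<^sub>R p3" unfolding D_def u1_u2_u3_def by (rule cramer)
  have e4: "2*w1*w3*bf X p1 p3 + 2*w2*w3*bf X p2 p3 = 0"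
    using qf_lin3[OF sym, of w1 p1 w2 p2 w3 p3] c4[symmetric] qf_scale[of X D p4] z b12 by simp
  have e5: "2*u1*u3*bf X p1 p3 + 2*u2*u3*bf X p2 p3 = 0"
    using qf_lin3[OF sym, of u1 p1 u2 p2 u3 p3] c5[symmetric] qf_scale[of X D p5] z b12 by simp
  have w3: "w3 \<noteq> 0" "u3 \<noteq> 0" using g unfolding w1_w2_w3_def u1_u2_u3_def by auto
  have e4': "w1*bf X p1 p3 + w2*bf X p2 p3 = 0"
  proof -
    have "2*w3*(w1*bf X p1 p3 + w2*bf X p2 p3) = 0" using e4 by (simp add: algebra_simps)
    then show ?thesis using w3 by simp
  qed
  have e5': "u1*bf X p1 p3 + u2*bf X p2 p3 = 0"
  proof -
    have "2*u3*(u1*bf X p1 p3 + u2*bf X p2 p3) = 0" using e5 by (simp add: algebra_simps)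
    then show ?thesis using w3 by simp
  qed
  have det: "w1*u2 - w2*u1 \<noteq> 0"
    unfolding w1_w2_w3_def u1_u2_u3_def pluecker using D g by simp
  have "(w1*u2 - w2*u1) * bf X p1 p3 = u2*(w1*bf X p1 p3 + w2*bf X p2 p3) - w2*(u1*bf X p1 p3 + u2*bf X p2 p3)"
    by (simp add: algebra_simps)
  then have b13: "bf X p1 p3 = 0" using e4' e5' det by simp
  have "(w1*u2 - w2*u1) * bf X p2 p3 = w1*(u1*bf X p1 p3 + u2*bf X p2 p3) - u1*(w1*bf X p1 p3 + w2*bf X p2 p3)"
    by (simp add: algebra_simps)
  then have b23: "bf X p2 p3 = 0" using e4' e5' det by simp
  have "qf X y = 0" for y
  proof -
    have "D*D*qf X y = qf X (D *\<^sub>R y)" by (simp add: qf_scale)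
    also have "\<dots> = 0" unfolding D_def cramer[of p1 p2 p3 y] qf_lin3[OF sym] using z b12 b13 b23 by simp
    finally show ?thesis using D unfolding D_def by simp
  qed
  then show ?thesis using qf_zero_imp sym by blast
qed

definition symm :: "real^3 \<Rightarrow> real^3 \<Rightarrow> real^3^3" where
  "symm a b = (\<chi> i j. (a$i*b$j + b$i*a$j)/2)"

definition intv :: "real^3 \<Rightarrow> bool" where "intv p \<longleftrightarrow> (\<forall>i. p$i \<in> \<int>)"

lemma symm_sym: "symmetric_form (symm a b)"
  unfolding symmetric_form_def symm_def transpose_def vec_eq_iff by (simp add: algebra_simps)

lemma qf_symm: "qf (symm a b) y = (a \<bullet> y) * (b \<bullet> y)"
  unfolding qf_expand3 symm_def inner_vec_def sum_3 by (simp add: algebra_simps)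

lemma qf_symm_cross: "qf (symm (cross3 p q) (cross3 r s)) y = tp p q y * tp r s y"
  unfolding qf_symm tp_def by simp

lemma tp_self: "tp a b a = 0" "tp a b b = 0" unfolding tp_expand by (simp_all add: algebra_simps)
lemma tp_perm: "tp a b c = tp b c a" "tp a b c = tp c a b" "tp b a c = - tp a b c"
  "tp a c b = - tp a b c" "tp c b a = - tp a b c"
  unfolding tp_expand by (simp_all add: algebra_simps)

lemma intv_cross: "intv a \<Longrightarrow> intv b \<Longrightarrow> intv (cross3 a b)"
  unfolding intv_def forall_3 by (simp add: cross3_simps)

lemma tp_int: "intv a \<Longrightarrow> intv b \<Longrightarrow> intv c \<Longrightarrow> tp a b c \<in> \<int>"
  unfolding intv_def forall_3 tp_expand by (simp)

lemma int_nz_ge1: "(x::real) \<in> \<int> \<Longrightarrow> x \<noteq> 0 \<Longrightarrow> 1 \<le> \<bar>x\<bar>"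
  by (auto elim!: Ints_cases)

lemma norm_cross_le: "norm (cross3 a b) \<le> norm a * norm b"
proof -
  have h: "(norm (cross3 a b))^2 + (a \<bullet> b)^2 = (norm a * norm b)^2" by (rule norm_cross_dot)
  have "0 \<le> (a \<bullet> b)^2" by simp
  then have "(norm (cross3 a b))^2 \<le> (norm a * norm b)^2" using h by linarith
  then show ?thesis by (rule power2_le_imp_le) simp
qed

lemma tp_le: "\<bar>tp a b c\<bar> \<le> norm a * norm b * norm c"
proof -
  have "\<bar>tp a b c\<bar> \<le> norm (cross3 a b) * norm c" unfolding tp_def by (rule Cauchy_Schwarz_ineq2)
  also have "\<dots> \<le> norm a * norm b * norm c" by (simp add: mult_right_mono norm_cross_le)
  finally show ?thesis .
qed

lemma qset_eq: "{\<bar>qcoef X i j\<bar> | i j. True} = (\<lambda>(i,j). \<bar>qcoef X i j\<bar>) ` UNIV" by auto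
lemma qset_fin: "finite {\<bar>qcoef X i j\<bar> | i j. True}" unfolding qset_eq by simp

lemma qcoef_le_qnorm: "\<bar>qcoef X i j\<bar> \<le> qnorm X"
  unfolding qnorm_def by (rule Max_ge[OF qset_fin]) auto

lemma qnorm_le: "(\<And>i j. \<bar>qcoef X i j\<bar> \<le> b) \<Longrightarrow> qnorm X \<le> b"
  unfolding qnorm_def by (subst Max_le_iff[OF qset_fin]) auto

lemma qnorm_nonneg: "0 \<le> qnorm X" using qcoef_le_qnorm[of X 1 1] by simp

lemma qcoef_add: "qcoef (X + Y) i j = qcoef X i j + qcoef Y i j" unfolding qcoef_def by simp
lemma qcoef_diff: "qcoef (X - Y) i j = qcoef X i j - qcoef Y i j" unfolding qcoef_def by simp
lemma qcoef_scale: "qcoef (c *\<^sub>R X) i j = c * qcoef X i j" unfolding qcoef_def by simp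

lemma qnorm_add: "qnorm (X + Y) \<le> qnorm X + qnorm Y"
  by (rule qnorm_le) (metis qcoef_add abs_triangle_ineq add_mono qcoef_le_qnorm order_trans)

lemma qnorm_scale: "qnorm (c *\<^sub>R X) \<le> \<bar>c\<bar> * qnorm X"
  by (rule qnorm_le) (simp add: qcoef_scale abs_mult mult_left_mono qcoef_le_qnorm)

lemma qnorm_diff_sym: "qnorm (X - Y) = qnorm (Y - X)"
  unfolding qnorm_def qcoef_diff by (metis abs_minus_commute)

lemma entry_le_qnorm: "\<bar>X$i$j\<bar> \<le> qnorm X"
proof (cases "i = j")
  case True then show ?thesis using qcoef_le_qnorm[of X i j] by (simp add: qcoef_def)
next
  case False then have "\<bar>2 * X$i$j\<bar> \<le> qnorm X" using qcoef_le_qnorm[of X i j] by (simp add: qcoef_def)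
  then show ?thesis by simp
qed

lemma qnorm_pos: "X \<noteq> 0 \<Longrightarrow> 0 < qnorm X"
proof -
  assume "X \<noteq> 0"
  then obtain i j where "X$i$j \<noteq> 0" by (metis vec_eq_iff zero_index)
  then have "0 < \<bar>X$i$j\<bar>" by simp
  then show ?thesis using entry_le_qnorm[of X i j] by linarith
qed

lemma qnorm_symm: "qnorm (symm a b) \<le> 2 * norm a * norm b"
proof (rule qnorm_le)
  fix i j
  have "\<bar>qcoef (symm a b) i j\<bar> \<le> \<bar>a$i*b$j\<bar> + \<bar>b$i*a$j\<bar>"
    unfolding qcoef_def symm_def by (auto simp: abs_mult intro: abs_triangle_ineq order_trans)
  also have "\<dots> \<le> norm a * norm b + norm b * norm a"
    by (intro add_mono) (simp_all add: abs_mult mult_mono component_le_norm_cart)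
  finally show "\<bar>qcoef (symm a b) i j\<bar> \<le> 2 * norm a * norm b" by simp
qed

lemma integral_symm: "intv a \<Longrightarrow> intv b \<Longrightarrow> integral_form (symm a b)"
proof -
  assume "intv a" "intv b"
  have "qcoef (symm a b) i j = (if i = j then a$i*b$i else a$i*b$j + b$i*a$j)" for i j
    unfolding qcoef_def symm_def by simp
  then show ?thesis unfolding integral_form_def using symm_sym \<open>intv a\<close> \<open>intv b\<close>
    unfolding intv_def by auto
qed

lemma integral_add: "integral_form X \<Longrightarrow> integral_form Y \<Longrightarrow> integral_form (X + Y)"
  unfolding integral_form_def symmetric_form_def qcoef_add by (auto simp: transpose_def vec_eq_iff)
lemma integral_diff: "integral_form X \<Longrightarrow> integral_form Y \<Longrightarrow> integral_form (X - Y)"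
  unfolding integral_form_def symmetric_form_def qcoef_diff by (auto simp: transpose_def vec_eq_iff)
lemma integral_scale: "integral_form X \<Longrightarrow> c \<in> \<int> \<Longrightarrow> integral_form (c *\<^sub>R X)"
  unfolding integral_form_def symmetric_form_def qcoef_scale by (auto simp: transpose_def vec_eq_iff)

lemma qf_add: "qf (X + Y) y = qf X y + qf Y y" unfolding qf_def by (simp add: matrix_vector_mult_add_rdistrib inner_add_right)
lemma qf_diff: "qf (X - Y) y = qf X y - qf Y y" unfolding qf_def by (simp add: matrix_vector_mult_diff_rdistrib inner_diff_right)
lemma qf_smult: "qf (c *\<^sub>R X) y = c * qf X y" unfolding qf_expand3 by (simp add: algebra_simps)

lemma sym_add: "symmetric_form X \<Longrightarrow> symmetric_form Y \<Longrightarrow> symmetric_form (X + Y)"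
  unfolding symmetric_form_def by (auto simp: transpose_def vec_eq_iff)
lemma sym_diff: "symmetric_form X \<Longrightarrow> symmetric_form Y \<Longrightarrow> symmetric_form (X - Y)"
  unfolding symmetric_form_def by (auto simp: transpose_def vec_eq_iff)
lemma sym_scale: "symmetric_form X \<Longrightarrow> symmetric_form (c *\<^sub>R X)"
  unfolding symmetric_form_def by (auto simp: transpose_def vec_eq_iff)

lemma tp_add3: "tp a b (c + d) = tp a b c + tp a b d" unfolding tp_def by (simp add: inner_add_right)

lemma tp_leN: "norm a \<le> N \<Longrightarrow> norm b \<le> N \<Longrightarrow> norm c \<le> N \<Longrightarrow> \<bar>tp a b c\<bar> \<le> N^3"
proof -
  assume h: "norm a \<le> N" "norm b \<le> N" "norm c \<le> N"
  have N0: "0 \<le> N" using h(1) norm_ge_zero[of a] by linarith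
  have "\<bar>tp a b c\<bar> \<le> norm a * norm b * norm c" by (rule tp_le)
  also have "\<dots> \<le> N * N * N" using h N0 by (intro mult_mono) auto
  finally show ?thesis by (simp add: power3_eq_cube)
qed

lemma qnorm_symm_cross: "norm a \<le> N \<Longrightarrow> norm b \<le> N \<Longrightarrow> norm c \<le> N \<Longrightarrow> norm d \<le> N \<Longrightarrow>
   qnorm (symm (cross3 a b) (cross3 c d)) \<le> 2 * N^4"
proof -
  assume h: "norm a \<le> N" "norm b \<le> N" "norm c \<le> N" "norm d \<le> N"
  have N0: "0 \<le> N" using h(1) norm_ge_zero order_trans by blast
  have "norm a * norm b \<le> N * N" using h N0 by (intro mult_mono) auto
  then have 1: "norm (cross3 a b) \<le> N * N" using norm_cross_le[of a b] by linarith
  have "norm c * norm d \<le> N * N" using h N0 by (intro mult_mono) auto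
  then have 2: "norm (cross3 c d) \<le> N * N" using norm_cross_le[of c d] by linarith
  have "qnorm (symm (cross3 a b) (cross3 c d)) \<le> 2 * norm (cross3 a b) * norm (cross3 c d)" by (rule qnorm_symm)
  also have "\<dots> \<le> 2 * (N*N) * (N*N)" using 1 2 by (intro mult_mono) auto
  finally show ?thesis by (simp add: power4_eq_xxxx mult.assoc)
qed

lemma qnorm_diff_le: "qnorm (X - Y) \<le> qnorm X + qnorm Y"
proof -
  have "qnorm (X + (-1) *\<^sub>R Y) \<le> qnorm X + qnorm ((-1) *\<^sub>R Y)" by (rule qnorm_add)
  also have "qnorm ((-1) *\<^sub>R Y) \<le> \<bar>-1\<bar> * qnorm Y" by (rule qnorm_scale)
  finally show ?thesis by simp
qed

lemma qnorm_add5: "qnorm (a + b + c + d + e) \<le> qnorm a + qnorm b + qnorm c + qnorm d + qnorm e"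
proof -
  have "qnorm (a + b + c + d + e) \<le> qnorm (a + b + c + d) + qnorm e" by (rule qnorm_add)
  also have "qnorm (a + b + c + d) \<le> qnorm (a + b + c) + qnorm d" by (rule qnorm_add)
  also have "qnorm (a + b + c) \<le> qnorm (a + b) + qnorm c" by (rule qnorm_add)
  also have "qnorm (a + b) \<le> qnorm a + qnorm b" by (rule qnorm_add)
  finally show ?thesis by simp
qed

lemma coef_bound:
  assumes "h \<in> \<int>" "h \<noteq> 0" "\<bar>q\<bar> \<le> e" "qnorm H \<le> B"
  shows "qnorm ((q / h) *\<^sub>R H) \<le> e * B"
proof -
  have "1 \<le> \<bar>h\<bar>" using int_nz_ge1 assms by blast
  then have "\<bar>q\<bar> / \<bar>h\<bar> \<le> \<bar>q\<bar>" by (simp add: divide_le_eq mult_le_cancel_left1)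
  then have a: "\<bar>q / h\<bar> \<le> e" using assms(3) by (simp add: abs_divide)
  have e0: "0 \<le> e" using assms(3) by linarith
  have "qnorm ((q / h) *\<^sub>R H) \<le> \<bar>q / h\<bar> * qnorm H" by (rule qnorm_scale)
  also have "\<dots> \<le> e * B" using a assms(4) qnorm_nonneg[of H] e0 by (intro mult_mono) auto
  finally show ?thesis .
qed

lemma piece1:
  fixes A :: "real^3^3" and p1 p2 p3 p4 p5 :: "real^3"
  assumes sym: "symmetric_form A"
    and iv: "intv p1" "intv p2" "intv p3" "intv p4" "intv p5"
    and gp: "tp p1 p2 p3 \<noteq> 0" "tp p1 p2 p4 \<noteq> 0" "tp p1 p2 p5 \<noteq> 0" "tp p1 p3 p4 \<noteq> 0"
      "tp p1 p3 p5 \<noteq> 0" "tp p1 p4 p5 \<noteq> 0" "tp p2 p3 p4 \<noteq> 0" "tp p2 p3 p5 \<noteq> 0"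
      "tp p2 p4 p5 \<noteq> 0" "tp p3 p4 p5 \<noteq> 0"
    and nb: "norm p1 \<le> N" "norm p2 \<le> N" "norm p3 \<le> N" "norm p4 \<le> N" "norm p5 \<le> N"
    and eb: "\<bar>qf A p1\<bar> \<le> e" "\<bar>qf A p2\<bar> \<le> e" "\<bar>qf A p3\<bar> \<le> e" "\<bar>qf A p4\<bar> \<le> e" "\<bar>qf A p5\<bar> \<le> e"
  shows "\<exists>A' \<mu>. integral_form A' \<and> A' \<noteq> 0 \<and> qnorm A' \<le> 4 * N^10 \<and> qnorm (A - \<mu> *\<^sub>R A') \<le> 10 * e * N^4"
proof -
  define H1 where "H1 = symm (cross3 p2 p3) (cross3 p4 p5)"
  define H2 where "H2 = symm (cross3 p1 p3) (cross3 p4 p5)"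
  define H3 where "H3 = symm (cross3 p1 p2) (cross3 p4 p5)"
  define H4 where "H4 = symm (cross3 p1 p2) (cross3 p3 p5)"
  define H5 where "H5 = symm (cross3 p1 p2) (cross3 p3 p4)"
  define h1 where "h1 = tp p2 p3 p1 * tp p4 p5 p1"
  define h2 where "h2 = tp p1 p3 p2 * tp p4 p5 p2"
  define h3 where "h3 = tp p1 p2 p3 * tp p4 p5 p3"
  define h4 where "h4 = tp p1 p2 p4 * tp p3 p5 p4"
  define h5 where "h5 = tp p1 p2 p5 * tp p3 p4 p5"
  have pe: "tp p2 p3 p1 = tp p1 p2 p3" "tp p4 p5 p1 = tp p1 p4 p5" "tp p1 p3 p2 = - tp p1 p2 p3"
    "tp p4 p5 p2 = tp p2 p4 p5" "tp p4 p5 p3 = tp p3 p4 p5" "tp p3 p5 p4 = - tp p3 p4 p5"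
    "tp p2 p4 p1 = tp p1 p2 p4"
    unfolding tp_expand by (simp_all add: algebra_simps)
  have hnz: "h1 \<noteq> 0" "h2 \<noteq> 0" "h3 \<noteq> 0" "h4 \<noteq> 0" "h5 \<noteq> 0"
    unfolding h1_def h2_def h3_def h4_def h5_def pe using gp by auto
  have hint: "h1 \<in> \<int>" "h2 \<in> \<int>" "h3 \<in> \<int>" "h4 \<in> \<int>" "h5 \<in> \<int>"
    unfolding h1_def h2_def h3_def h4_def h5_def using iv by (simp_all add: tp_int)
  have qH: "qf H1 p1 = h1" "qf H1 p2 = 0" "qf H1 p3 = 0" "qf H1 p4 = 0" "qf H1 p5 = 0"
    "qf H2 p1 = 0" "qf H2 p2 = h2" "qf H2 p3 = 0" "qf H2 p4 = 0" "qf H2 p5 = 0"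
    "qf H3 p1 = 0" "qf H3 p2 = 0" "qf H3 p3 = h3" "qf H3 p4 = 0" "qf H3 p5 = 0"
    "qf H4 p1 = 0" "qf H4 p2 = 0" "qf H4 p3 = 0" "qf H4 p4 = h4" "qf H4 p5 = 0"
    "qf H5 p1 = 0" "qf H5 p2 = 0" "qf H5 p3 = 0" "qf H5 p4 = 0" "qf H5 p5 = h5"
    unfolding H1_def H2_def H3_def H4_def H5_def h1_def h2_def h3_def h4_def h5_def qf_symm_cross
    by (simp_all add: tp_self)
  define c1 c2 c3 c4 c5 where "c1 = qf A p1 / h1" "c2 = qf A p2 / h2" "c3 = qf A p3 / h3"
    "c4 = qf A p4 / h4" "c5 = qf A p5 / h5"
  define S where "S = c1 *\<^sub>R H1 + c2 *\<^sub>R H2 + c3 *\<^sub>R H3 + c4 *\<^sub>R H4 + c5 *\<^sub>R H5"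
  define G where "G = A - S"
  have qS: "qf S y = c1 * qf H1 y + c2 * qf H2 y + c3 * qf H3 y + c4 * qf H4 y + c5 * qf H5 y" for y
    unfolding S_def qf_add qf_smult by simp
  have qG: "qf G p1 = 0" "qf G p2 = 0" "qf G p3 = 0" "qf G p4 = 0" "qf G p5 = 0"
    unfolding G_def qf_diff qS qH c1_c2_c3_c4_c5_def using hnz by simp_all
  have symS: "symmetric_form S" unfolding S_def H1_def H2_def H3_def H4_def H5_def
    by (intro sym_add sym_scale symm_sym)
  have symG: "symmetric_form G" unfolding G_def using sym symS by (rule sym_diff)
  define \<alpha> \<beta> where "\<alpha> = tp p1 p2 p5 * tp p3 p4 p5" "\<beta> = tp p1 p3 p5 * tp p2 p4 p5"
  define Q' where "Q' = \<alpha> *\<^sub>R symm (cross3 p1 p3) (cross3 p2 p4) - \<beta> *\<^sub>R symm (cross3 p1 p2) (cross3 p3 p4)"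
  have qQ: "qf Q' p1 = 0" "qf Q' p2 = 0" "qf Q' p3 = 0" "qf Q' p4 = 0" "qf Q' p5 = 0"
    unfolding Q'_def qf_diff qf_smult qf_symm_cross \<alpha>_\<beta>_def by (simp_all add: tp_self)
  have qQ12: "qf Q' (p1 + p2) = \<alpha> * (- tp p1 p2 p3) * tp p1 p2 p4"
    unfolding Q'_def qf_diff qf_smult qf_symm_cross tp_add3 using pe by (simp add: tp_self)
  have qQ12nz: "qf Q' (p1 + p2) \<noteq> 0" unfolding qQ12 \<alpha>_\<beta>_def using gp by simp
  have symQ: "symmetric_form Q'" unfolding Q'_def by (intro sym_diff sym_scale symm_sym)
  define \<mu> where "\<mu> = qf G (p1 + p2) / qf Q' (p1 + p2)"
  define X where "X = G - \<mu> *\<^sub>R Q'"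
  have "X = 0"
  proof (rule lemmaU[of X p1 p2 p3 p4 p5])
    show "symmetric_form X" unfolding X_def using symG symQ by (intro sym_diff sym_scale)
  qed (use gp qG qQ qQ12nz pe in \<open>simp_all add: X_def qf_diff qf_smult \<mu>_def\<close>)
  then have AS: "A - \<mu> *\<^sub>R Q' = S" unfolding X_def G_def by (simp add: algebra_simps)
  have N0: "0 \<le> N" using nb(1) norm_ge_zero[of p1] by linarith
  have Hb: "qnorm H1 \<le> 2*N^4" "qnorm H2 \<le> 2*N^4" "qnorm H3 \<le> 2*N^4" "qnorm H4 \<le> 2*N^4" "qnorm H5 \<le> 2*N^4"
    unfolding H1_def H2_def H3_def H4_def H5_def using nb by (simp_all add: qnorm_symm_cross)
  have cb: "qnorm (c1 *\<^sub>R H1) \<le> e * (2*N^4)" "qnorm (c2 *\<^sub>R H2) \<le> e * (2*N^4)"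
    "qnorm (c3 *\<^sub>R H3) \<le> e * (2*N^4)" "qnorm (c4 *\<^sub>R H4) \<le> e * (2*N^4)"
    "qnorm (c5 *\<^sub>R H5) \<le> e * (2*N^4)"
    unfolding c1_c2_c3_c4_c5_def using hint hnz eb Hb by (simp_all add: coef_bound)
  have "qnorm S \<le> qnorm (c1 *\<^sub>R H1) + qnorm (c2 *\<^sub>R H2) + qnorm (c3 *\<^sub>R H3) + qnorm (c4 *\<^sub>R H4) + qnorm (c5 *\<^sub>R H5)"
    unfolding S_def by (rule qnorm_add5)
  also have "\<dots> \<le> 10 * e * N^4" using cb by simp
  finally have Sb: "qnorm S \<le> 10 * e * N^4" .
  have intQ: "integral_form Q'" unfolding Q'_def \<alpha>_\<beta>_def using iv
    by (intro integral_diff integral_scale integral_symm intv_cross) (simp_all add: tp_int)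
  have Q0: "Q' \<noteq> 0" using qQ12nz by (auto simp: qf_def)
  have t: "\<bar>tp p1 p2 p5\<bar> \<le> N^3" "\<bar>tp p3 p4 p5\<bar> \<le> N^3" "\<bar>tp p1 p3 p5\<bar> \<le> N^3" "\<bar>tp p2 p4 p5\<bar> \<le> N^3"
    using nb by (simp_all add: tp_leN)
  have ab1: "\<bar>\<alpha>\<bar> \<le> N^3 * N^3" unfolding \<alpha>_\<beta>_def abs_mult
    by (rule mult_mono[OF t(1) t(2)]) (simp_all add: N0)
  have ab2: "\<bar>\<beta>\<bar> \<le> N^3 * N^3" unfolding \<alpha>_\<beta>_def abs_mult
    by (rule mult_mono[OF t(3) t(4)]) (simp_all add: N0)
  note ab = ab1 ab2
  have "qnorm Q' \<le> qnorm (\<alpha> *\<^sub>R symm (cross3 p1 p3) (cross3 p2 p4)) + qnorm (\<beta> *\<^sub>R symm (cross3 p1 p2) (cross3 p3 p4))"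
    unfolding Q'_def by (rule qnorm_diff_le)
  also have "\<dots> \<le> \<bar>\<alpha>\<bar> * qnorm (symm (cross3 p1 p3) (cross3 p2 p4)) + \<bar>\<beta>\<bar> * qnorm (symm (cross3 p1 p2) (cross3 p3 p4))"
    by (intro add_mono qnorm_scale)
  also have "\<dots> \<le> (N^3 * N^3) * (2*N^4) + (N^3 * N^3) * (2*N^4)"
    using ab nb by (intro add_mono mult_mono) (simp_all add: qnorm_symm_cross N0 qnorm_nonneg)
  also have "\<dots> = 4 * N^10" by (simp add: power_add[symmetric] algebra_simps)
  finally have Qb: "qnorm Q' \<le> 4 * N^10" .
  show ?thesis using intQ Q0 Qb AS Sb by auto
qed

lemma trip_diff:
  fixes x1 x2 x3 y1 y2 y3 m e :: real
  assumes "\<bar>x1\<bar> \<le> m" "\<bar>x2\<bar> \<le> m" "\<bar>x3\<bar> \<le> m" "\<bar>y1\<bar> \<le> m" "\<bar>y2\<bar> \<le> m" "\<bar>y3\<bar> \<le> m"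
    "\<bar>x1 - y1\<bar> \<le> e" "\<bar>x2 - y2\<bar> \<le> e" "\<bar>x3 - y3\<bar> \<le> e"
  shows "\<bar>x1*x2*x3 - y1*y2*y3\<bar> \<le> 3 * m^2 * e"
proof -
  have m0: "0 \<le> m" using assms(1) by linarith
  have e0: "0 \<le> e" using assms(7) by linarith
  have id: "x1*x2*x3 - y1*y2*y3 = (x1 - y1)*(x2*x3) + y1*((x2 - y2)*x3) + y1*(y2*(x3 - y3))"
    by (simp add: algebra_simps)
  have a1: "\<bar>x2\<bar>*\<bar>x3\<bar> \<le> m*m" by (rule mult_mono[OF assms(2) assms(3)]) (simp_all add: m0)
  have a: "\<bar>x1 - y1\<bar>*(\<bar>x2\<bar>*\<bar>x3\<bar>) \<le> e * (m*m)" by (rule mult_mono[OF assms(7) a1]) (simp_all add: e0)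
  have b1: "\<bar>x2 - y2\<bar>*\<bar>x3\<bar> \<le> e*m" by (rule mult_mono[OF assms(8) assms(3)]) (simp_all add: e0)
  have b: "\<bar>y1\<bar>*(\<bar>x2 - y2\<bar>*\<bar>x3\<bar>) \<le> m * (e*m)" by (rule mult_mono[OF assms(4) b1]) (simp_all add: m0)
  have c1: "\<bar>y2\<bar>*\<bar>x3 - y3\<bar> \<le> m*e" by (rule mult_mono[OF assms(5) assms(9)]) (simp_all add: m0)
  have c: "\<bar>y1\<bar>*(\<bar>y2\<bar>*\<bar>x3 - y3\<bar>) \<le> m * (m*e)" by (rule mult_mono[OF assms(4) c1]) (simp_all add: m0)
  have tri: "\<bar>u + v + w\<bar> \<le> \<bar>u\<bar> + \<bar>v\<bar> + \<bar>w\<bar>" for u v w :: real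
    using abs_triangle_ineq[of "u+v" w] abs_triangle_ineq[of u v] by linarith
  have "\<bar>x1*x2*x3 - y1*y2*y3\<bar> \<le> e * (m*m) + m * (e*m) + m * (m*e)"
    unfolding id using tri[of "(x1 - y1)*(x2*x3)" "y1*((x2 - y2)*x3)" "y1*(y2*(x3 - y3))"] a b c
    unfolding abs_mult by linarith
  also have "\<dots> = 3 * m^2 * e" by (simp add: power2_eq_square algebra_simps)
  finally show ?thesis .
qed

lemma sum6:
  fixes a1 a2 a3 a4 a5 a6 b1 b2 b3 b4 b5 b6 k :: real
  assumes "\<bar>a1 - b1\<bar> \<le> k" "\<bar>a2 - b2\<bar> \<le> k" "\<bar>a3 - b3\<bar> \<le> k" "\<bar>a4 - b4\<bar> \<le> k" "\<bar>a5 - b5\<bar> \<le> k" "\<bar>a6 - b6\<bar> \<le> k"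
  shows "\<bar>(a1 + a2 + a3 - a4 - a5 - a6) - (b1 + b2 + b3 - b4 - b5 - b6)\<bar> \<le> 6 * k"
  using assms unfolding abs_le_iff by linarith

lemma det_lip:
  fixes A B :: "real^3^3"
  assumes "\<And>i j. \<bar>A$i$j\<bar> \<le> m" "\<And>i j. \<bar>B$i$j\<bar> \<le> m" "\<And>i j. \<bar>A$i$j - B$i$j\<bar> \<le> e"
  shows "\<bar>det A - det B\<bar> \<le> 18 * m^2 * e"
proof -
  let ?t = "\<lambda>i1 j1 i2 j2 i3 j3. \<bar>A$i1$j1*A$i2$j2*A$i3$j3 - B$i1$j1*B$i2$j2*B$i3$j3\<bar> \<le> 3 * m^2 * e"
  have t: "?t i1 j1 i2 j2 i3 j3" for i1 j1 i2 j2 i3 j3 by (rule trip_diff) (simp_all add: assms)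
  have "\<bar>det A - det B\<bar> \<le> 6 * (3 * m^2 * e)" unfolding det_3
    by (rule sum6[OF t[of 1 1 2 2 3 3] t[of 1 2 2 3 3 1] t[of 1 3 2 1 3 2] t[of 1 1 2 3 3 2] t[of 1 2 2 1 3 3] t[of 1 3 2 2 3 1]])
  then show ?thesis by simp
qed

lemma det_scale3: "det (c *\<^sub>R (X::real^3^3)) = c^3 * det X"
  unfolding det_3 by (simp add: algebra_simps power3_eq_cube)

lemma piece2:
  fixes A A' :: "real^3^3"
  defines "m \<equiv> qnorm A + 1"
  defines "Kd \<equiv> 18 * m^2"
  assumes qA: "qdet A = 1" and cl: "qnorm (A - \<mu> *\<^sub>R A') \<le> \<delta>" and d1: "\<delta> \<le> 1" and d2: "\<delta> \<le> 1 / (2*Kd)"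
  shows "qnorm (A - inverse (root 3 (qdet A')) *\<^sub>R A') \<le> (1 + 2*m*Kd) * \<delta>"
proof -
  define B where "B = \<mu> *\<^sub>R A'"
  have m1: "1 \<le> m" unfolding m_def using qnorm_nonneg[of A] by simp
  have Kd0: "0 < Kd" unfolding Kd_def using m1 by simp
  have d0: "0 \<le> \<delta>" using cl qnorm_nonneg[of "A - \<mu> *\<^sub>R A'"] by linarith
  have qB: "qnorm B \<le> m"
  proof -
    have "qnorm B = qnorm (A - (A - B))" by simp
    also have "\<dots> \<le> qnorm A + qnorm (A - B)" by (rule qnorm_diff_le)
    finally show ?thesis using cl d1 unfolding B_def m_def by linarith
  qed
  have eA: "\<bar>A$i$j\<bar> \<le> m" for i j using entry_le_qnorm[of A i j] unfolding m_def by linarith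
  have eB: "\<bar>B$i$j\<bar> \<le> m" for i j using entry_le_qnorm[of B i j] qB by linarith
  have eD: "\<bar>A$i$j - B$i$j\<bar> \<le> \<delta>" for i j using entry_le_qnorm[of "A - B" i j] cl unfolding B_def by simp
  have dl: "\<bar>det A - det B\<bar> \<le> Kd * \<delta>" unfolding Kd_def by (rule det_lip[OF eA eB eD])
  define s where "s = qdet B"
  have s1: "\<bar>s - 1\<bar> \<le> Kd * \<delta>" using dl qA unfolding s_def qdet_def by linarith
  have Kdd: "Kd * \<delta> \<le> 1/2" using d2 Kd0 by (simp add: field_simps)
  have spos: "1/2 \<le> s" using s1 Kdd by linarith
  define t where "t = root 3 s"
  have t3: "t^3 = s" unfolding t_def using spos by simp
  have tpos: "0 < t" unfolding t_def using spos by simp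
  have th: "1/2 \<le> t"
  proof (rule ccontr)
    assume "\<not> 1/2 \<le> t"
    then have "t < 1/2" by simp
    then have "t^3 < (1/2)^3" using tpos by (intro power_strict_mono) auto
    moreover have "(1/2::real)^3 = 1/8" by (simp add: power3_eq_cube)
    ultimately show False using t3 spos by linarith
  qed
  have tl: "\<bar>t - 1\<bar> \<le> \<bar>s - 1\<bar>"
  proof -
    have f: "t^3 - 1 = (t - 1) * (t^2 + t + 1)" by (simp add: power2_eq_square power3_eq_cube algebra_simps)
    have p: "0 < t^2 + t + 1" using tpos by (simp add: add_pos_pos)
    have "\<bar>s - 1\<bar> = \<bar>t - 1\<bar> * (t^2 + t + 1)" using f p t3 by (simp add: abs_mult)
    moreover have "\<bar>t - 1\<bar> * 1 \<le> \<bar>t - 1\<bar> * (t^2 + t + 1)" using tpos by (intro mult_left_mono) auto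
    ultimately show ?thesis by simp
  qed
  have inv: "\<bar>1 - 1/t\<bar> \<le> 2 * \<bar>s - 1\<bar>"
  proof -
    have f: "1 - 1/t = (t - 1) * (1/t)" using tpos by (simp add: diff_divide_distrib)
    have it: "1/t \<le> 2" using th tpos by (simp add: divide_le_eq)
    have "\<bar>1 - 1/t\<bar> = \<bar>t - 1\<bar> * (1/t)" unfolding f abs_mult using tpos by simp
    also have "\<dots> \<le> \<bar>t - 1\<bar> * 2" by (rule mult_left_mono[OF it]) simp
    also have "\<dots> \<le> 2 * \<bar>s - 1\<bar>" using tl by simp
    finally show ?thesis .
  qed
  have mu0: "\<mu> \<noteq> 0"
  proof
    assume "\<mu> = 0"
    then have "s = 0" unfolding s_def B_def qdet_def det_scale3 by simp
    then show False using spos by simp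
  qed
  have sB: "s = \<mu>^3 * qdet A'" unfolding s_def B_def qdet_def det_scale3 by simp
  have rt: "t = \<mu> * root 3 (qdet A')" unfolding t_def sB real_root_mult
    by (simp add: odd_real_root_power_cancel)
  have r0: "root 3 (qdet A') \<noteq> 0" using rt tpos by auto
  have "(1/t) * \<mu> = inverse (root 3 (qdet A'))" unfolding rt using mu0 r0 by (simp add: divide_simps)
  then have eq: "inverse (root 3 (qdet A')) *\<^sub>R A' = (1/t) *\<^sub>R B"
    unfolding B_def by simp
  have "(1 - 1/t) *\<^sub>R B = B - (1/t) *\<^sub>R B" by (simp add: scaleR_diff_left)
  then have E: "A - inverse (root 3 (qdet A')) *\<^sub>R A' = (A - B) + (1 - 1/t) *\<^sub>R B"
    unfolding eq by simp
  have "qnorm (A - inverse (root 3 (qdet A')) *\<^sub>R A') \<le> qnorm (A - B) + \<bar>1 - 1/t\<bar> * qnorm B"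
    unfolding E using qnorm_add[of "A - B" "(1 - 1/t) *\<^sub>R B"] qnorm_scale[of "1 - 1/t" B] by linarith
  also have "\<dots> \<le> \<delta> + (2 * (Kd * \<delta>)) * m"
  proof -
    have "2 * \<bar>s - 1\<bar> \<le> 2 * (Kd * \<delta>)" using s1 by simp
    with inv have "\<bar>1 - 1/t\<bar> \<le> 2 * (Kd * \<delta>)" by (rule order_trans)
    then have "\<bar>1 - 1/t\<bar> * qnorm B \<le> (2 * (Kd * \<delta>)) * m"
      by (rule mult_mono[OF _ qB]) (use Kd0 d0 qnorm_nonneg in simp_all)
    then show ?thesis using cl unfolding B_def by linarith
  qed
  also have "\<dots> = (1 + 2*m*Kd) * \<delta>" by (simp add: algebra_simps)
  finally show ?thesis .
qed

definition gp10 :: "real^3 \<Rightarrow> real^3 \<Rightarrow> real^3 \<Rightarrow> real^3 \<Rightarrow> real^3 \<Rightarrow> bool" where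
  "gp10 p1 p2 p3 p4 p5 \<longleftrightarrow> tp p1 p2 p3 \<noteq> 0 \<and> tp p1 p2 p4 \<noteq> 0 \<and> tp p1 p2 p5 \<noteq> 0 \<and> tp p1 p3 p4 \<noteq> 0 \<and>
      tp p1 p3 p5 \<noteq> 0 \<and> tp p1 p4 p5 \<noteq> 0 \<and> tp p2 p3 p4 \<noteq> 0 \<and> tp p2 p3 p5 \<noteq> 0 \<and>
      tp p2 p4 p5 \<noteq> 0 \<and> tp p3 p4 p5 \<noteq> 0"

lemma cross_nz: "tp a b c \<noteq> 0 \<Longrightarrow> cross3 a b \<noteq> 0"
  unfolding tp_def by auto

lemma exists_perp:
  assumes "t \<noteq> (0::real^3)"
  shows "\<exists>e. cross3 t e \<noteq> 0"
proof (rule ccontr)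
  assume "\<not> ?thesis"
  then have h: "\<And>e. cross3 t e = 0" by auto
  have "t$1 = 0 \<and> t$2 = 0 \<and> t$3 = 0"
    using h[of "vector[1,0,0]"] h[of "vector[0,1,0]"] h[of "vector[0,0,1]"]
    unfolding cross3_def vec_eq_iff forall_3 by simp
  then have "t = 0" unfolding vec_eq_iff forall_3 by simp
  then show False using assms by simp
qed

lemma card6: "card (set [a,b,c,d,e,f]) \<le> 6"
  using card_length[of "[a,b,c,d,e,f]"] by simp

lemma greedy:
  fixes Z :: "(real^3) set"
  assumes nz: "0 \<notin> Z" and no5: "\<And>p1 p2 p3 p4 p5. p1 \<in> Z \<Longrightarrow> p2 \<in> Z \<Longrightarrow> p3 \<in> Z \<Longrightarrow> p4 \<in> Z \<Longrightarrow> p5 \<in> Z \<Longrightarrow> \<not> gp10 p1 p2 p3 p4 p5"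
  shows "\<exists>P. finite P \<and> card P \<le> 6 \<and> (\<forall>n\<in>P. n \<noteq> 0) \<and> (\<forall>p\<in>Z. \<exists>n\<in>P. n \<bullet> p = 0)"
proof (cases "Z = {}")
  case True then show ?thesis by (intro exI[of _ "{}"]) auto
next
  case False
  then obtain t1 where t1: "t1 \<in> Z" by auto
  then have t10: "t1 \<noteq> 0" using nz by auto
  show ?thesis
  proof (cases "\<forall>p\<in>Z. cross3 t1 p = 0")
    case True
    obtain e where e: "cross3 t1 e \<noteq> 0" using exists_perp[OF t10] by auto
    have "\<forall>p\<in>Z. cross3 t1 e \<bullet> p = 0"
    proof
      fix p assume "p \<in> Z"
      then have "cross3 t1 p = 0" using True by auto
      then have "tp t1 p e = 0" unfolding tp_def by simp
      moreover have "tp t1 e p = - tp t1 p e" unfolding tp_expand by (simp add: algebra_simps)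
      ultimately show "cross3 t1 e \<bullet> p = 0" unfolding tp_def by simp
    qed
    then show ?thesis using e by (intro exI[of _ "{cross3 t1 e}"]) auto
  next
    case False
    then obtain t2 where t2: "t2 \<in> Z" "cross3 t1 t2 \<noteq> 0" by auto
    show ?thesis
    proof (cases "\<forall>p\<in>Z. tp t1 t2 p = 0")
      case True
      then show ?thesis using t2 by (intro exI[of _ "{cross3 t1 t2}"]) (auto simp: tp_def)
    next
      case False
      then obtain t3 where t3: "t3 \<in> Z" "tp t1 t2 t3 \<noteq> 0" by auto
      have "tp t1 t3 t2 = - tp t1 t2 t3" "tp t2 t3 t1 = tp t1 t2 t3" unfolding tp_expand by (simp_all add: algebra_simps)
      then have t3': "tp t1 t3 t2 \<noteq> 0" "tp t2 t3 t1 \<noteq> 0" using t3(2) by simp_all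
      show ?thesis
      proof (cases "\<forall>p\<in>Z. tp t1 t2 p = 0 \<or> tp t1 t3 p = 0 \<or> tp t2 t3 p = 0")
        case True
        let ?P = "set [cross3 t1 t2, cross3 t1 t3, cross3 t2 t3, cross3 t1 t2, cross3 t1 t2, cross3 t1 t2]"
        have "finite ?P" by simp
        moreover have "card ?P \<le> 6" by (rule card6)
        moreover have "\<forall>n\<in>?P. n \<noteq> 0" using cross_nz[OF t3(2)] cross_nz[OF t3'(1)] cross_nz[OF t3'(2)] by simp
        moreover have "\<forall>p\<in>Z. \<exists>n\<in>?P. n \<bullet> p = 0"
        proof
          fix p assume "p \<in> Z"
          then have "tp t1 t2 p = 0 \<or> tp t1 t3 p = 0 \<or> tp t2 t3 p = 0" using True by blast
          then show "\<exists>n\<in>?P. n \<bullet> p = 0" unfolding tp_def by (elim disjE) simp_all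
        qed
        ultimately show ?thesis by blast
      next
        case False
        then obtain t4 where t4: "t4 \<in> Z" "tp t1 t2 t4 \<noteq> 0" "tp t1 t3 t4 \<noteq> 0" "tp t2 t3 t4 \<noteq> 0" by auto
        have "tp t1 t4 t2 = - tp t1 t2 t4" "tp t1 t4 t3 = - tp t1 t3 t4" "tp t2 t4 t3 = - tp t2 t3 t4" "tp t3 t4 t1 = tp t1 t3 t4"
          unfolding tp_expand by (simp_all add: algebra_simps)
        then have t4': "tp t1 t4 t2 \<noteq> 0" "tp t1 t4 t3 \<noteq> 0" "tp t2 t4 t3 \<noteq> 0" "tp t3 t4 t1 \<noteq> 0"
          using t4(2-4) by simp_all
        let ?P = "set [cross3 t1 t2, cross3 t1 t3, cross3 t1 t4, cross3 t2 t3, cross3 t2 t4, cross3 t3 t4]"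
        have "finite ?P" by simp
        moreover have "card ?P \<le> 6" by (rule card6)
        moreover have "\<forall>n\<in>?P. n \<noteq> 0" using cross_nz[OF t3(2)] cross_nz[OF t3'(1)] cross_nz[OF t3'(2)]
          cross_nz[OF t4'(1)] cross_nz[OF t4'(3)] cross_nz[OF t4'(4)] by simp
        moreover have "\<forall>p\<in>Z. \<exists>n\<in>?P. n \<bullet> p = 0"
        proof
          fix p assume p: "p \<in> Z"
          have "\<not> gp10 t1 t2 t3 t4 p" using no5 t1 t2 t3 t4 p by blast
          then have "tp t1 t2 p = 0 \<or> tp t1 t3 p = 0 \<or> tp t1 t4 p = 0 \<or> tp t2 t3 p = 0 \<or> tp t2 t4 p = 0 \<or> tp t3 t4 p = 0"
            unfolding gp10_def using t3(2) t4(2-4) by blast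
          then show "\<exists>n\<in>?P. n \<bullet> p = 0" unfolding tp_def by (elim disjE) simp_all
        qed
        ultimately show ?thesis by blast
      qed
    qed
  qed
qed

lemma final_ineq:
  fixes R M C c C1 \<eta> q :: real
  assumes R1: "R > 1" and M1: "M > 1" and C0: "C > 0" and c0: "c > 0" and C10: "C1 > 0" and e0: "\<eta> > 0"
    and he: "\<eta> \<le> c * (4*C^10) powr (-M) / (10*C1*C^4)"
    and q0: "q > 0" and qb: "q \<le> 4*(C*R^2)^10"
    and h: "c * q powr (-M) < C1 * (10 * (\<eta> * R powr (-50*M)) * (C*R^2)^4)"
  shows False
proof -
  define K where "K = (4*C^10) powr (-M)"
  have K0: "0 < K" unfolding K_def using C0 by simp
  have R0: "0 < R" using R1 by simp
  have r20: "R^20 = R powr 20" using powr_realpow[OF R0, of 20] by simp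
  have r8: "R^8 = R powr 8" using powr_realpow[OF R0, of 8] by simp
  have e1: "(4*(C*R^2)^10) = (4*C^10) * R^20" by (simp add: power_mult_distrib power_mult[symmetric])
  have e2: "(R^20) powr (-M) = R powr (-20*M)" unfolding r20 powr_powr by simp
  have "(4*(C*R^2)^10) powr (-M) = K * R powr (-20*M)"
    unfolding e1 K_def powr_mult e2 ..
  moreover have "(4*(C*R^2)^10) powr (-M) \<le> q powr (-M)" using M1 q0 qb by (intro powr_mono2') auto
  ultimately have l: "K * R powr (-20*M) \<le> q powr (-M)" by simp
  have "C1 * (10 * (\<eta> * R powr (-50*M)) * (C*R^2)^4) = (10*C1*C^4*\<eta>) * (R powr 8 * R powr (-50*M))"
    unfolding r8[symmetric] by (simp add: power_mult_distrib power_mult[symmetric] algebra_simps)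
  also have "\<dots> = (10*C1*C^4*\<eta>) * R powr (8 - 50*M)" by (simp add: powr_add[symmetric])
  also have "\<dots> \<le> (c*K) * R powr (8 - 50*M)"
  proof (rule mult_right_mono)
    have "10*C1*C^4 > 0" using C0 C10 by simp
    then show "10*C1*C^4*\<eta> \<le> c*K" using he unfolding K_def by (simp add: field_simps)
  qed simp
  also have "\<dots> < (c*K) * R powr (-20*M)"
    using c0 K0 R1 M1 by (intro mult_strict_left_mono powr_less_mono) auto
  finally have "C1 * (10 * (\<eta> * R powr (-50*M)) * (C*R^2)^4) < c * (K * R powr (-20*M))" by simp
  moreover have "c * (K * R powr (-20*M)) \<le> c * q powr (-M)" using l c0 by simp
  ultimately show False using h by linarith
qed

theorem lemma2p4:
  fixes M :: real and A g :: "real^3^3"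
  assumes "M > 1"
    and "symmetric_form A"
    and "\<exists>u w. qf A u > 0 \<and> qf A w < 0"
    and "qdet A = 1"
    and "diophantine_type A M"
    and "det g = 1"
    and "\<forall>v. qf A v = Q0 (g *v v)"
  shows "\<exists>\<eta>. 0 < \<eta> \<and> \<eta> < 1 \<and>
     (\<forall>R > 10. \<exists>P. finite P \<and> card P \<le> 6 \<and> (\<forall>n\<in>P. n \<noteq> 0) \<and>
        {v \<in> lattice_of g \<inter> Hset \<eta> M. R \<le> infnorm v \<and> infnorm v < R^2}
          \<subseteq> (\<Union>n\<in>P. plane n))"
proof -
  note M1 = assms(1) and symA = assms(2) and qA = assms(4) and Qg = assms(7)
  obtain c where c0: "c > 0" and dio: "\<And>A'. integral_form A' \<Longrightarrow> A' \<noteq> 0 \<Longrightarrow>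
      qnorm (A - inverse (root 3 (qdet A')) *\<^sub>R A') > c * qnorm A' powr (- M)"
    using assms(5) unfolding diophantine_type_def by blast
  have "invertible g" using assms(6) by (simp add: invertible_det_nz)
  then obtain gi where gi: "gi ** g = mat 1" unfolding invertible_def by blast
  obtain K where K0: "K > 0" and K: "\<And>x. norm (gi *v x) \<le> norm x * K"
    using bounded_linear.pos_bounded[OF matrix_vector_mul_bounded_linear[of gi]] by blast
  define C where "C = K * sqrt 3"
  have C0: "C > 0" unfolding C_def using K0 by simp
  define m where "m = qnorm A + 1"
  define Kd where "Kd = 18 * m^2"
  define \<delta>0 where "\<delta>0 = min 1 (1 / (2*Kd))"
  define C1 where "C1 = 1 + 2*m*Kd"
  have m1: "1 \<le> m" unfolding m_def using qnorm_nonneg[of A] by simp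
  have Kd0: "Kd > 0" unfolding Kd_def using m1 by simp
  have d00: "\<delta>0 > 0" unfolding \<delta>0_def using Kd0 by simp
  have "0 < 2*m*Kd" using m1 Kd0 by simp
  then have C10: "C1 > 0" unfolding C1_def by linarith
  define \<eta> where "\<eta> = min (1/2) (min (\<delta>0 / (10*C^4)) (c * (4*C^10) powr (-M) / (10*C1*C^4)))"
  have e0: "\<eta> > 0" unfolding \<eta>_def using d00 C0 c0 C10 by simp
  have e1: "\<eta> < 1" unfolding \<eta>_def by simp
  have eA: "\<eta> \<le> \<delta>0 / (10*C^4)" unfolding \<eta>_def by simp
  have eB: "\<eta> \<le> c * (4*C^10) powr (-M) / (10*C1*C^4)" unfolding \<eta>_def by simp
  show ?thesis
  proof (intro exI[of _ \<eta>] conjI e0 e1 allI impI)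
    fix R :: real assume R10: "R > 10"
    have R0: "R > 0" and R1: "R > 1" using R10 by auto
    define Sv where "Sv = {v \<in> lattice_of g \<inter> Hset \<eta> M. R \<le> infnorm v \<and> infnorm v < R^2}"
    define Z where "Z = (\<lambda>v. gi *v v) ` Sv"
    define N where "N = C * R^2"
    define e where "e = \<eta> * R powr (-50*M)"
    have Zprop: "intv z \<and> norm z \<le> N \<and> \<bar>qf A z\<bar> \<le> e \<and> z \<noteq> 0" if "z \<in> Z" for z
    proof -
      obtain v where v: "v \<in> Sv" "z = gi *v v" using \<open>z \<in> Z\<close> unfolding Z_def by auto
      obtain zi :: "int^3" where vz: "v = g *v (\<chi> i. of_int (zi$i))"
        using v(1) unfolding Sv_def lattice_of_def by auto
      define zr :: "real^3" where "zr = (\<chi> i. of_int (zi$i))"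
      have zz: "z = zr" unfolding v(2) vz zr_def matrix_vector_mul_assoc gi by simp
      have gz: "g *v z = v" unfolding zz zr_def vz ..
      have iz: "intv z" unfolding zz zr_def intv_def by simp
      have Rv: "R \<le> infnorm v" "infnorm v < R^2" using v(1) unfolding Sv_def by auto
      have Hv: "\<bar>Q0 v\<bar> < \<eta> * infnorm v powr (- 50 * M)" using v(1) unfolding Sv_def Hset_def by auto
      have "infnorm v powr (- 50 * M) \<le> R powr (- 50 * M)"
        using Rv M1 R0 by (intro powr_mono2') auto
      then have "\<eta> * infnorm v powr (- 50 * M) \<le> e" unfolding e_def using e0 by (simp add: mult_left_mono)
      then have qz: "\<bar>qf A z\<bar> \<le> e" using Hv Qg gz by (metis less_imp_le order_trans)
      have "norm z \<le> norm v * K" unfolding v(2) by (rule K)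
      also have "\<dots> \<le> (sqrt 3 * infnorm v) * K"
        using norm_le_infnorm[of v] K0 by (intro mult_right_mono) auto
      also have "\<dots> \<le> (sqrt 3 * R^2) * K" using Rv K0 by (intro mult_right_mono mult_left_mono) auto
      also have "\<dots> = N" unfolding N_def C_def by simp
      finally have nz: "norm z \<le> N" .
      have "z \<noteq> 0"
      proof
        assume "z = 0"
        then have "v = 0" using gz by simp
        then show False using Rv R0 by (simp add: infnorm_0)
      qed
      then show ?thesis using iz nz qz by blast
    qed
    have no5: "\<not> gp10 p1 p2 p3 p4 p5" if p: "p1 \<in> Z" "p2 \<in> Z" "p3 \<in> Z" "p4 \<in> Z" "p5 \<in> Z" for p1 p2 p3 p4 p5
    proof
      assume gp: "gp10 p1 p2 p3 p4 p5"
      obtain A' \<mu> where A': "integral_form A'" "A' \<noteq> 0" "qnorm A' \<le> 4 * N^10"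
        "qnorm (A - \<mu> *\<^sub>R A') \<le> 10 * e * N^4"
        using piece1[OF symA, of p1 p2 p3 p4 p5 N e] gp Zprop[OF p(1)] Zprop[OF p(2)] Zprop[OF p(3)]
          Zprop[OF p(4)] Zprop[OF p(5)] unfolding gp10_def by blast
      define \<delta> where "\<delta> = 10 * e * N^4"
      have "R powr (-50*M) * R^8 \<le> 1"
      proof -
        have r8: "R^8 = R powr 8" using powr_realpow[OF R0, of 8] by simp
        have "R powr (-50*M) * R^8 = R powr (-50*M + 8)"
          unfolding r8 powr_add ..
        also have "\<dots> \<le> R powr 0" using M1 R1 by (intro powr_mono) auto
        finally show ?thesis using R0 by simp
      qed
      then have "\<delta> \<le> 10 * \<eta> * C^4"
        unfolding \<delta>_def e_def N_def using e0 C0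
        by (simp add: power_mult_distrib power_mult[symmetric] mult_left_le algebra_simps)
      also have "\<dots> \<le> \<delta>0" using eA C0 by (simp add: field_simps)
      finally have dd: "\<delta> \<le> \<delta>0" .
      have "qnorm (A - inverse (root 3 (qdet A')) *\<^sub>R A') \<le> (1 + 2*m*Kd) * \<delta>"
        unfolding m_def Kd_def
      proof (rule piece2[OF qA])
        show "qnorm (A - \<mu> *\<^sub>R A') \<le> \<delta>" using A'(4) unfolding \<delta>_def .
        show "\<delta> \<le> 1" using dd unfolding \<delta>0_def by simp
        show "\<delta> \<le> 1 / (2 * (18 * (qnorm A + 1)^2))" using dd unfolding \<delta>0_def Kd_def m_def by simp
      qed
      then have up: "qnorm (A - inverse (root 3 (qdet A')) *\<^sub>R A') \<le> C1 * (10 * e * N^4)"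
        unfolding C1_def \<delta>_def .
      have "c * qnorm A' powr (- M) < C1 * (10 * (\<eta> * R powr (-50*M)) * (C*R^2)^4)"
        using dio[OF A'(1,2)] up unfolding e_def N_def by linarith
      then show False
        using final_ineq[OF R1 M1 C0 c0 C10 e0 eB qnorm_pos[OF A'(2)]] A'(3) unfolding N_def by blast
    qed
    have "0 \<notin> Z" using Zprop by blast
    then obtain P where P: "finite P" "card P \<le> 6" "\<forall>n\<in>P. n \<noteq> 0" "\<forall>p\<in>Z. \<exists>n\<in>P. n \<bullet> p = 0"
      using greedy[of Z] no5 by blast
    define P' where "P' = (\<lambda>n. n v* gi) ` P"
    have "finite P'" unfolding P'_def using P(1) by simp
    moreover have "card P' \<le> 6" unfolding P'_def using card_image_le[OF P(1), of "\<lambda>n. n v* gi"] P(2) by linarith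
    moreover have "\<forall>n\<in>P'. n \<noteq> 0"
    proof
      fix n' assume "n' \<in> P'"
      then obtain n where n: "n \<in> P" "n' = n v* gi" unfolding P'_def by auto
      have "n' v* g = n" unfolding n(2) vector_matrix_mul_assoc gi by simp
      then show "n' \<noteq> 0" using P(3) n(1) by auto
    qed
    moreover have "Sv \<subseteq> (\<Union>n\<in>P'. plane n)"
    proof
      fix v assume "v \<in> Sv"
      then have "gi *v v \<in> Z" unfolding Z_def by auto
      then obtain n where n: "n \<in> P" "n \<bullet> (gi *v v) = 0" using P(4) by auto
      then have "(n v* gi) \<bullet> v = 0" by (simp add: dot_lmul_matrix)
      then show "v \<in> (\<Union>n\<in>P'. plane n)" unfolding P'_def plane_def using n(1) by auto
    qed
    ultimately show "\<exists>P. finite P \<and> card P \<le> 6 \<and> (\<forall>n\<in>P. n \<noteq> 0) \<and>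
        {v \<in> lattice_of g \<inter> Hset \<eta> M. R \<le> infnorm v \<and> infnorm v < R^2} \<subseteq> (\<Union>n\<in>P. plane n)"
      unfolding Sv_def by blast
  qed
qed

end
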